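(* Let $q\ge 3$ be a prime power, $n\ge 2d\ge 2$, $0\le i\le d$, $1\le j\le d$, $h_{\max}=\min\{i,d-j\}$ and $c=g_{h_{\max}}(i,j)$. If it is not the case that ($n=2d$ and $d-j\le i$), then $$\tfrac49 q^{c}<|G_j(i)|<4q^{c}.$$ If $n=2d$ and $d-j\le i$, then $$1\ge \frac{|G_j(i)|}{|T_{d-j}(i,j)|}\ge \frac{5}{32}.$$
   Context: For integers $m\ge 0$ and $l$, ${m\brack l}=\prod_{t=1}^{l}\frac{q^{m-t+1}-1}{q^t-1}$ for $l\ge0$ and $0$ for $l<0$. For $0\le i,j\le d$, $$G_j(i)=\sum_{h=\max\{0,i-j\}}^{\min\{i,d-j\}}(-1)^{i-h}q^{j(j-i+h)+\binom{i-h}{2}}{i\brack h}{d-h\brack j}{n-d-i+h\brack n-d-j}$$ (the eigenvalues of the Grassmann graph $G_q(n,d,j)$), and $T_h(i,j)$ is the $h$-th summand (and $0$ for $h$ outside the summation range). Also $$g_h(i,j)=-\tfrac12h^2+h\left(n-d-j+\tfrac12\right)+j(d-j)+\tfrac{i(i-1)}{2}+(n-d)(j-i).$$ *)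

theory Defs
  imports Complex_Main "HOL-Number_Theory.Prime_Powers"
begin

definition gbinom :: "real \<Rightarrow> nat \<Rightarrow> int \<Rightarrow> real" where
  "gbinom q m l = (if l < 0 then 0 else
     (\<Prod>t\<in>{1..nat l}. (q ^ (m - t + 1) - 1) / (q ^ t - 1)))"

text \<open>Summation range of G_j(i): max{0,i-j} .. min{i,d-j}.\<close>
definition hrange :: "nat \<Rightarrow> nat \<Rightarrow> nat \<Rightarrow> nat set" where
  "hrange d i j = {i - j .. min i (d - j)}"

definition Tsum :: "real \<Rightarrow> nat \<Rightarrow> nat \<Rightarrow> nat \<Rightarrow> nat \<Rightarrow> nat \<Rightarrow> real" where
  "Tsum q n d h i j = (if h \<in> hrange d i j then
      (-1) ^ (i - h) * q ^ (j * (j + h - i) + ((i - h) choose 2))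
      * gbinom q i (int h) * gbinom q (d - h) (int j)
      * gbinom q (n - d - i + h) (int (n - d - j))
    else 0)"

definition Geig :: "real \<Rightarrow> nat \<Rightarrow> nat \<Rightarrow> nat \<Rightarrow> nat \<Rightarrow> real" where
  "Geig q n d j i = (\<Sum>h\<in>hrange d i j. Tsum q n d h i j)"

definition gexp :: "nat \<Rightarrow> nat \<Rightarrow> nat \<Rightarrow> nat \<Rightarrow> nat \<Rightarrow> real" where
  "gexp n d h i j = - ((real h)^2 / 2) + real h * (real n - real d - real j + 1/2)
     + real j * (real d - real j) + real i * (real i - 1) / 2
     + (real n - real d) * (real j - real i)"

end

theory Submission
  imports Defs
begin

definition FF :: "real \<Rightarrow> nat \<Rightarrow> real" where "FF q m = (\<Prod>s\<in>{1..m}. q^s - 1)"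

lemma FF_0[simp]: "FF q 0 = 1" by (simp add: FF_def)
lemma FF_Suc: "FF q (Suc m) = FF q m * (q^(Suc m) - 1)"
  by (simp add: FF_def prod.nat_ivl_Suc' mult.commute)

lemma qpow_gt1: "(q::real) \<ge> 3 \<Longrightarrow> k \<ge> 1 \<Longrightarrow> q^k > 1"
  by (rule one_less_power) auto

lemma FF_pos: "(q::real) \<ge> 3 \<Longrightarrow> FF q m > 0"
  unfolding FF_def by (rule prod_pos) (auto intro: qpow_gt1)

lemma gb_step: "gbinom q m (int (Suc l)) = gbinom q m (int l) * ((q^(m - Suc l + 1) - 1)/(q^(Suc l) - 1))"
proof -
  have "nat (int (Suc l)) = Suc l" by simp
  then show ?thesis unfolding gbinom_def by (simp del: of_nat_Suc power_Suc add: prod.nat_ivl_Suc')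
qed

lemma gb_F: "(q::real) \<ge> 3 \<Longrightarrow> l \<le> m \<Longrightarrow> gbinom q m (int l) = FF q m / (FF q l * FF q (m-l))"
proof (induction l)
  case 0 thus ?case using FF_pos[of q m] by (simp add: gbinom_def)
next
  case (Suc l)
  have e: "m - l = Suc (m - Suc l)" using Suc.prems by simp
  have e2: "m - Suc l + 1 = m - l" using Suc.prems by simp
  have p1: "FF q (m - Suc l) > 0" "FF q l > 0" "FF q m > 0" using FF_pos Suc.prems by auto
  have p2: "q^(Suc l) - 1 > 0" "q^(m-l) - 1 > 0" using qpow_gt1[of q "Suc l"] qpow_gt1[of q "m-l"] Suc.prems by auto
  have "gbinom q m (int (Suc l)) = FF q m / (FF q l * FF q (m-l)) * ((q^(m-l) - 1)/(q^(Suc l) - 1))"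
  proof -
    have IH: "gbinom q m (int l) = FF q m / (FF q l * FF q (m-l))" using Suc by simp
    show ?thesis by (simp only: gb_step e2 IH)
  qed
  also have "\<dots> = FF q m / (FF q (Suc l) * FF q (m - Suc l))"
  proof -
    have F2: "FF q (m-l) = FF q (m - Suc l) * (q^(m-l) - 1)" using FF_Suc[of q "m - Suc l"] e by simp
    have aux: "\<And>x a b c d::real. c \<noteq> 0 \<Longrightarrow> d \<noteq> 0 \<Longrightarrow> a \<noteq> 0 \<Longrightarrow> b \<noteq> 0 \<Longrightarrow> x/(a*(b*c))*(c/d) = x/((a*d)*b)"
      by (simp add: field_simps)
    show ?thesis unfolding F2 FF_Suc[of q l] by (rule aux) (use p1 p2 in auto)
  qed
  finally show ?case .
qed

lemma gb_mm: "(q::real) \<ge> 3 \<Longrightarrow> gbinom q m (int m) = 1"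
  using gb_F[of q m m] FF_pos[of q m] by simp

lemma gb_Suc_m: assumes "(q::real) \<ge> 3" "l \<le> m"
  shows "gbinom q (Suc m) (int l) = gbinom q m (int l) * (q^(Suc m) - 1) / (q^(Suc m - l) - 1)"
proof -
  have e: "Suc m - l = Suc (m - l)" using assms by simp
  have F2: "FF q (Suc m - l) = FF q (m - l) * (q^(Suc m - l) - 1)" unfolding e FF_Suc ..
  have p1: "FF q (m - l) > 0" "FF q l > 0" "FF q m > 0" using FF_pos assms by auto
  have p2: "q^(Suc m - l) - 1 > 0" using qpow_gt1[of q "Suc m - l"] assms by auto
  have nz: "q^(Suc m - l) - 1 \<noteq> 0" "FF q l \<noteq> 0" "FF q (m-l) \<noteq> 0" using p1 p2 by auto
  have aux: "\<And>x a b c d::real. c \<noteq> 0 \<Longrightarrow> a \<noteq> 0 \<Longrightarrow> b \<noteq> 0 \<Longrightarrow> (x*d)/(a*(b*c)) = x/(a*b)*d/c"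
      by (simp add: field_simps)
  show ?thesis using assms unfolding gb_F[OF assms] gb_F[OF assms(1) le_SucI[OF assms(2)]] F2 FF_Suc[of q m]
    by (intro aux nz)
qed

lemma gb_lower: assumes "(q::real) \<ge> 3" shows "q^(l*k) \<le> gbinom q (l+k) (int l)"
proof (induction k)
  case 0 thus ?case using gb_mm[OF assms] by simp
next
  case (Suc k)
  define L where "L = q^l"
  define X where "X = q^(Suc k)"
  have L1: "L \<ge> 1" unfolding L_def using assms by simp
  have X1: "X > 1" unfolding X_def using qpow_gt1[OF assms, of "Suc k"] by simp
  have eq: "gbinom q (l + Suc k) (int l) = gbinom q (l+k) (int l) * (L*X - 1) / (X - 1)"
    using gb_Suc_m[OF assms, of l "l+k"] by (simp add: L_def X_def power_add)
  have "q^(l * Suc k) = q^(l*k) * L" by (simp add: L_def power_add mult.commute)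
  also have "\<dots> \<le> gbinom q (l+k) (int l) * L" using Suc L1 by (simp add: mult_right_mono)
  also have "\<dots> \<le> gbinom q (l+k) (int l) * ((L*X - 1) / (X - 1))"
  proof (rule mult_left_mono)
    show "L \<le> (L*X - 1) / (X - 1)" using X1 L1 by (simp add: field_simps)
    show "0 \<le> gbinom q (l+k) (int l)" using Suc order_trans[of 0 "q^(l*k)"] assms by simp
  qed
  finally show ?case using eq by simp
qed

lemma key_ineq: fixes L q X0 :: real assumes "L \<ge> 1" "q \<ge> 3" "X0 \<ge> 1"
  shows "X0 * (L*(q*X0) - 1) * (q*X0 + 1) \<le> L*(q*X0) * (X0+1) * (q*X0 - 1)"
proof -
  have d: "L*(q*X0) * (X0+1) * (q*X0 - 1) - X0 * (L*(q*X0) - 1) * (q*X0 + 1) = X0 * (L*q*(q-2)*X0 + q*X0 - L*q + 1)"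
    by (simp add: algebra_simps)
  have a: "L*q*(q-2)*X0 \<ge> L*q*(q-2)" using assms by (simp add: mult_left_mono)
  have b: "L*q*(q-3) \<ge> 0" using assms by simp
  have c: "q*X0 \<ge> q" using assms by simp
  have e: "L*q*(q-2)*X0 + q*X0 - L*q + 1 = (L*q*(q-2)*X0 - L*q*(q-2)) + L*q*(q-3) + (q*X0 - q) + (q + 1)"
    by (simp add: algebra_simps)
  have "L*q*(q-2)*X0 + q*X0 - L*q + 1 \<ge> 0" unfolding e using a b c assms by linarith
  hence "X0 * (L*q*(q-2)*X0 + q*X0 - L*q + 1) \<ge> 0" using assms by simp
  thus ?thesis using d by linarith
qed

lemma gb_upper: assumes "(q::real) \<ge> 3"
  shows "gbinom q (l+k) (int l) * (q^k + 1) \<le> 2 * q^(l*k) * q^k"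
proof (induction k)
  case 0 thus ?case using gb_mm[OF assms] by simp
next
  case (Suc k)
  define L where "L = q^l"
  define X0 where "X0 = q^k"
  define G where "G = gbinom q (l+k) (int l)"
  define P where "P = q^(l*k)"
  have L1: "L \<ge> 1" unfolding L_def using assms by simp
  have X01: "X0 \<ge> 1" unfolding X0_def using assms by simp
  have X1: "q*X0 > 1" using qpow_gt1[OF assms, of "Suc k"] unfolding X0_def by simp
  have P0: "P \<ge> 0" unfolding P_def using assms by simp
  have IH: "G * (X0 + 1) \<le> 2 * P * X0" using Suc by (simp add: G_def X0_def P_def)
  have eq: "gbinom q (l + Suc k) (int l) = G * (L*(q*X0) - 1) / (q*X0 - 1)"
    using gb_Suc_m[OF assms, of l "l+k"] by (simp add: L_def X0_def G_def power_add)
  have "0 \<le> q^(l*k)" using assms by simp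
  hence G0: "G \<ge> 0" using gb_lower[OF assms, of l k] unfolding G_def by linarith
  have "1*(q*X0) \<le> L*(q*X0)" by (rule mult_right_mono) (use L1 X1 in auto)
  hence pos1: "L*(q*X0) - 1 \<ge> 0" using X1 by simp
  have "G * (L*(q*X0) - 1) * (q*X0 + 1) * (X0 + 1) = (G * (X0 + 1)) * ((L*(q*X0) - 1) * (q*X0 + 1))"
    by (simp add: algebra_simps)
  also have "\<dots> \<le> (2*P*X0) * ((L*(q*X0) - 1) * (q*X0 + 1))"
    using IH pos1 X1 by (intro mult_right_mono) auto
  also have "\<dots> = 2*P * (X0 * (L*(q*X0) - 1) * (q*X0 + 1))" by (simp add: algebra_simps)
  also have "\<dots> \<le> 2*P * (L*(q*X0) * (X0+1) * (q*X0 - 1))"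
    using key_ineq[OF L1 assms X01] P0 by (intro mult_left_mono) auto
  finally have m: "G * (L*(q*X0) - 1) * (q*X0 + 1) * (X0 + 1) \<le> (2*P*L*(q*X0) * (q*X0 - 1)) * (X0+1)"
    by (simp add: algebra_simps)
  have m2: "G * (L*(q*X0) - 1) * (q*X0 + 1) \<le> 2*P*L*(q*X0) * (q*X0 - 1)"
    using m X01 by (simp add: mult_le_cancel_right)
  have "gbinom q (l + Suc k) (int l) * (q^Suc k + 1) = G * (L*(q*X0) - 1) * (q*X0 + 1) / (q*X0 - 1)"
    unfolding eq X0_def by simp
  also have "\<dots> \<le> 2*P*L*(q*X0)" using m2 X1 by (simp add: divide_le_eq)
  also have "\<dots> = 2 * q^(l * Suc k) * q^Suc k"
  proof -
    have "q^(l * Suc k) = P * L" unfolding P_def L_def by (simp add: power_add mult.commute)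
    thus ?thesis unfolding X0_def by simp
  qed
  finally show ?case .
qed

lemma gb_lower': assumes "(q::real) \<ge> 3" "l \<le> m" shows "q^(l*(m-l)) \<le> gbinom q m (int l)"
  using gb_lower[OF assms(1), of l "m-l"] assms(2) by simp

lemma gb_upper': assumes "(q::real) \<ge> 3" "l \<le> m"
  shows "gbinom q m (int l) * (q^(m-l) + 1) \<le> 2 * q^(l*(m-l)) * q^(m-l)"
  using gb_upper[OF assms(1), of l "m-l"] assms(2) by simp

lemma gb_pos: assumes "(q::real) \<ge> 3" "l \<le> m" shows "gbinom q m (int l) > 0"
proof -
  have "0 < q^(l*(m-l))" using assms by simp
  thus ?thesis using gb_lower'[OF assms] by linarith
qed

lemma gb_lt2: assumes "(q::real) \<ge> 3" "l \<le> m" shows "gbinom q m (int l) < 2 * q^(l*(m-l))"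
proof -
  define X where "X = q^(m-l)"
  have X: "X > 0" unfolding X_def using assms by simp
  have "gbinom q m (int l) * X < gbinom q m (int l) * (X + 1)" using gb_pos[OF assms] by simp
  also have "\<dots> \<le> 2 * q^(l*(m-l)) * X" using gb_upper'[OF assms] unfolding X_def .
  finally show ?thesis using X by simp
qed

definition VV :: "real \<Rightarrow> nat \<Rightarrow> nat \<Rightarrow> nat \<Rightarrow> nat \<Rightarrow> nat \<Rightarrow> real" where
  "VV q n d h i j = q ^ (j * (j + h - i) + ((i - h) choose 2))
      * gbinom q i (int h) * gbinom q (d - h) (int j)
      * gbinom q (n - d - i + h) (int (n - d - j))"

lemma T_form: assumes "(q::real) \<ge> 3" "h \<in> hrange d i j" "i \<le> d" "2*d \<le> n" "j \<le> d"
  shows "Tsum q n d h i j = (-1)^(i-h) * VV q n d h i j" "VV q n d h i j > 0"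
proof -
  show "Tsum q n d h i j = (-1)^(i-h) * VV q n d h i j"
    using assms(2) unfolding Tsum_def VV_def by (simp add: mult.assoc)
  have r: "h \<le> i" "j \<le> d - h" "n - d - j \<le> n - d - i + h" using assms(2-5) unfolding hrange_def by auto
  show "VV q n d h i j > 0" unfolding VV_def using gb_pos[OF assms(1) r(1)] gb_pos[OF assms(1) r(2)] gb_pos[OF assms(1) r(3)] assms(1)
    by simp
qed

lemma T_abs: assumes "(q::real) \<ge> 3" "h \<in> hrange d i j" "i \<le> d" "2*d \<le> n" "j \<le> d"
  shows "\<bar>Tsum q n d h i j\<bar> = VV q n d h i j"
  using T_form[OF assms] by (simp add: abs_mult)

lemma choose2_Suc: "(Suc a choose 2) = a + (a choose 2)"
  by (simp add: numeral_2_eq_2)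

lemma ratio_id: assumes q: "(q::real) \<ge> 3" and a: "Suc p \<le> i" "Suc p + j \<le> d" "i \<le> j + p" "2*d \<le> n"
  shows "VV q n d p i j * (q^(i-p) - 1) * (q^(d-p-j) - 1) * (q^(n-d-i+p+1) - 1) * q^j
       = VV q n d (Suc p) i j * q^(i-p-1) * (q^(Suc p) - 1) * (q^(d-p) - 1) * (q^(j+p+1-i) - 1)"
proof -
  define B1 where "B1 = gbinom q i (int (Suc p))"
  define B1' where "B1' = gbinom q i (int p)"
  define B2 where "B2 = gbinom q (d - Suc p) (int j)"
  define B2' where "B2' = gbinom q (d - p) (int j)"
  define B3 where "B3 = gbinom q (n - d - i + Suc p) (int (n - d - j))"
  define B3' where "B3' = gbinom q (n - d - i + p) (int (n - d - j))"
  define E where "E = j * (j + Suc p - i) + ((i - Suc p) choose 2)"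
  define E' where "E' = j * (j + p - i) + ((i - p) choose 2)"
  have V1: "VV q n d (Suc p) i j = q^E * B1 * B2 * B3" unfolding VV_def E_def B1_def B2_def B3_def ..
  have V2: "VV q n d p i j = q^E' * B1' * B2' * B3'" unfolding VV_def E'_def B1'_def B2'_def B3'_def ..
  have nz1: "q^(Suc p) - 1 \<noteq> 0" using qpow_gt1[OF q, of "Suc p"] by simp
  have r1: "B1' * (q^(i-p) - 1) = B1 * (q^(Suc p) - 1)"
  proof -
    have e: "i - Suc p + 1 = i - p" using a by simp
    show ?thesis unfolding B1_def B1'_def gb_step e using nz1 by simp
  qed
  have r2: "B2' * (q^(d-p-j) - 1) = B2 * (q^(d-p) - 1)"
  proof -
    have e: "d - p = Suc (d - Suc p)" using a by simp
    have j: "j \<le> d - Suc p" using a by simp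
    have j1: "Suc (d - Suc p) - j \<ge> 1" using j by arith
    have nz: "q^(Suc (d - Suc p) - j) - 1 \<noteq> 0" using qpow_gt1[OF q j1] by simp
    have e2: "d - p - j = Suc (d - Suc p) - j" using a by simp
    show ?thesis unfolding B2_def B2'_def e2 unfolding e gb_Suc_m[OF q j] using nz by simp
  qed
  have r3: "B3' * (q^(n-d-i+p+1) - 1) = B3 * (q^(j+p+1-i) - 1)"
  proof -
    have e: "n - d - i + Suc p = Suc (n - d - i + p)" using a by simp
    have j: "n - d - j \<le> n - d - i + p" using a by simp
    have e2: "Suc (n - d - i + p) - (n - d - j) = j + p + 1 - i" using a by simp
    have j1: "j+p+1-i \<ge> 1" using a by arith
    have nz: "q^(j+p+1-i) - 1 \<noteq> 0" using qpow_gt1[OF q j1] by simp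
    show ?thesis unfolding B3_def B3'_def e gb_Suc_m[OF q j] e2 using nz by simp
  qed
  have r0: "q^E' * q^j = q^E * q^(i-p-1)"
  proof -
    have e1: "j + p - i + 1 = j + Suc p - i" using a by simp
    obtain a where aa: "i - p = Suc a" "i - Suc p = a" "i - p - 1 = a" using a by (metis Suc_diff_Suc Suc_le_eq diff_Suc_1)
    have "E' + j = E + (i-p-1)" unfolding E_def E'_def aa choose2_Suc e1[symmetric]
      by simp
    thus ?thesis by (simp flip: power_add)
  qed
  have "VV q n d p i j * (q^(i-p) - 1) * (q^(d-p-j) - 1) * (q^(n-d-i+p+1) - 1) * q^j
      = (q^E' * q^j) * (B1' * (q^(i-p) - 1)) * (B2' * (q^(d-p-j) - 1)) * (B3' * (q^(n-d-i+p+1) - 1))"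
    unfolding V2 by (simp only: mult_ac)
  also have "\<dots> = (q^E * q^(i-p-1)) * (B1 * (q^(Suc p) - 1)) * (B2 * (q^(d-p) - 1)) * (B3 * (q^(j+p+1-i) - 1))"
    by (simp only: r0 r1 r2 r3)
  also have "\<dots> = VV q n d (Suc p) i j * q^(i-p-1) * (q^(Suc p) - 1) * (q^(d-p) - 1) * (q^(j+p+1-i) - 1)"
    unfolding V1 by (simp only: mult_ac)
  finally show ?thesis .
qed

lemma three_lb: fixes x y z :: real assumes "x \<ge> 3" "y \<ge> 3" "z \<ge> 3"
  shows "(8/27)*(x*y*z) \<le> (x-1)*(y-1)*(z-1)"
proof -
  have "(2/3*x)*(2/3*y) \<le> (x-1)*(y-1)" using assms by (intro mult_mono) auto
  hence "(2/3*x)*(2/3*y)*(2/3*z) \<le> (x-1)*(y-1)*(z-1)" using assms by (intro mult_mono) auto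
  thus ?thesis by (simp add: algebra_simps)
qed

lemma three_ub: fixes x y z :: real assumes "x \<ge> 1" "y \<ge> 1" "z \<ge> 1"
  shows "(x-1)*(y-1)*(z-1) \<le> x*y*z"
proof -
  have "(x-1)*(y-1) \<le> x*y" using assms by (intro mult_mono) auto
  thus ?thesis using assms by (intro mult_mono) auto
qed

lemma ratio_crude: assumes q: "(q::real) \<ge> 3" and a: "Suc p \<le> i" "Suc p + j \<le> d" "i \<le> j + p" "2*d \<le> n"
   and b: "p + d + j + 2 \<le> n"
  shows "VV q n d p i j \<le> 3/8 * VV q n d (Suc p) i j"
proof -
  have hr: "p \<in> hrange d i j" "Suc p \<in> hrange d i j" using a unfolding hrange_def by auto
  have id: "i \<le> d" "j \<le> d" using a by auto
  have V0: "VV q n d p i j > 0" "VV q n d (Suc p) i j > 0" using T_form(2)[OF q hr(1) id(1) a(4) id(2)] T_form(2)[OF q hr(2) id(1) a(4) id(2)] by auto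
  define A1 where "A1 = q^(i-p)"
  define A2 where "A2 = q^(d-p-j)"
  define A3 where "A3 = q^(n-d-i+p+1)"
  have qk: "\<And>k. k \<ge> 1 \<Longrightarrow> q^k \<ge> 3"
  proof -
    fix k :: nat assume "k \<ge> 1"
    hence "q^1 \<le> q^k" using q by (intro power_increasing) auto
    thus "q^k \<ge> 3" using q by simp
  qed
  have A: "A1 \<ge> 3" "A2 \<ge> 3" "A3 \<ge> 3" unfolding A1_def A2_def A3_def
    by (rule qk, use a in simp)+
  have q1: "\<And>k. q^k \<ge> 1" using q by simp
  have ex1: "(i-p) + (d-p-j) + (n-d-i+p+1) + j = (d+j+1) + (n-p-d-j)" using a b by simp
  have ex2: "(i-p-1) + Suc p + (d-p) + (j+p+1-i) = d+j+1" using a by simp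
  define Q where "Q = q^(d+j+1)"
  have Q0: "Q > 0" unfolding Q_def using q by simp
  have big: "q^(n-p-d-j) \<ge> 9"
  proof -
    have "q^2 \<le> q^(n-p-d-j)" using q b by (intro power_increasing) auto
    moreover have "q^2 \<ge> 3^2" using q by (intro power_mono) auto
    ultimately show ?thesis by simp
  qed
  have "VV q n d p i j * (8/27) * (Q * 9) \<le> VV q n d p i j * (8/27) * (Q * q^(n-p-d-j))"
    using V0 Q0 big by (intro mult_left_mono) auto
  also have "\<dots> = VV q n d p i j * ((8/27) * (A1*A2*A3)) * q^j"
  proof -
    have "A1*A2*A3*q^j = Q * q^(n-p-d-j)" unfolding A1_def A2_def A3_def Q_def
      by (simp only: ex1 flip: power_add)
    thus ?thesis by (simp add: algebra_simps)
  qed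
  also have "\<dots> \<le> VV q n d p i j * ((A1-1)*(A2-1)*(A3-1)) * q^j"
    using three_lb[OF A] V0 q by (intro mult_right_mono mult_left_mono) auto
  also have "\<dots> = VV q n d (Suc p) i j * q^(i-p-1) * ((q^(Suc p) - 1) * (q^(d-p) - 1) * (q^(j+p+1-i) - 1))"
    using ratio_id[OF q a] unfolding A1_def A2_def A3_def by (simp add: algebra_simps)
  also have "\<dots> \<le> VV q n d (Suc p) i j * q^(i-p-1) * (q^(Suc p) * q^(d-p) * q^(j+p+1-i))"
    by (rule mult_left_mono[OF three_ub[OF q1[of "Suc p"] q1[of "d-p"] q1[of "j+p+1-i"]]]) (use V0 q in simp)
  also have "\<dots> = VV q n d (Suc p) i j * Q"
    unfolding Q_def by (simp only: ex2[symmetric] power_add mult_ac)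
  finally have "(VV q n d p i j * (8/3)) * Q \<le> VV q n d (Suc p) i j * Q" by (simp add: algebra_simps)
  hence "VV q n d p i j * (8/3) \<le> VV q n d (Suc p) i j" using Q0 by simp
  thus ?thesis by simp
qed

lemma ratio_special: assumes q: "(q::real) \<ge> 3" and a: "n = 2*d" "Suc p + j = d" "Suc p \<le> i" "i \<le> j + p"
  shows "VV q n d p i j \<le> 3/4 * VV q n d (Suc p) i j"
proof -
  have a': "Suc p \<le> i" "Suc p + j \<le> d" "i \<le> j + p" "2*d \<le> n" using a by auto
  have hr: "p \<in> hrange d i j" "Suc p \<in> hrange d i j" using a unfolding hrange_def by auto
  have id: "i \<le> d" "j \<le> d" using a by auto
  have V0: "VV q n d p i j > 0" "VV q n d (Suc p) i j > 0" using T_form(2)[OF q hr(1) id(1) a'(4) id(2)] T_form(2)[OF q hr(2) id(1) a'(4) id(2)] by auto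
  define k where "k = d - i"
  define u where "u = i - p"
  have k1: "k \<ge> 1" and u1: "u \<ge> 1" unfolding k_def u_def using a by auto
  have ee: "i - p = u" "d - p - j = 1" "n - d - i + p + 1 = p + 1 + k" "d - p = u + k" "j + p + 1 - i = k" "i - p - 1 = u - 1"
    using a unfolding k_def u_def by auto
  have ej: "j + k = (u + 2*k - 2) + 1" "u - 1 + k + (k - 1) = u + 2*k - 2" using a k1 u1 unfolding k_def u_def by auto
  have idn: "VV q n d p i j * (q^u - 1) * (q - 1) * (q^(p+1+k) - 1) * q^j
       = VV q n d (Suc p) i j * q^(u-1) * (q^(Suc p) - 1) * (q^(u+k) - 1) * (q^k - 1)"
    using ratio_id[OF q a'] unfolding ee(2) unfolding ee by simp
  have qge: "\<And>m. q^m \<ge> 1" using q by simp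
  have i1: "(q^(Suc p) - 1) * q^k \<le> q^(p+1+k) - 1"
  proof -
    have "(q^(Suc p) - 1) * q^k = q^(p+1+k) - q^k" by (simp add: algebra_simps power_add)
    thus ?thesis using qge[of k] by simp
  qed
  have i2: "q^(u+k) - 1 \<le> 3/2 * q^k * (q^u - 1)"
  proof -
    have "q^u \<ge> q^1" using q u1 by (intro power_increasing) auto
    hence "q^u - 1 \<ge> 2" using q by simp
    hence "q^k * 2 \<le> q^k * (q^u - 1)" using qge[of k] by (intro mult_left_mono) auto
    moreover have "q^(u+k) - 1 = q^k * (q^u - 1) + q^k - 1" by (simp add: algebra_simps power_add)
    ultimately show ?thesis by simp
  qed
  have i3: "q^k - 1 \<le> 3/2 * q^(k-1) * (q - 1)"
  proof -
    have "q^(k-1) * 2 \<le> q^(k-1) * (q - 1)" using qge[of "k-1"] q by (intro mult_left_mono) auto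
    moreover have "q^k = q^(k-1) * q" using k1 by (metis Suc_diff_le diff_Suc_1 power_Suc2)
    ultimately show ?thesis by (simp add: algebra_simps)
  qed
  define Z where "Z = (q^u - 1) * (q - 1) * (q^(p+1+k) - 1)"
  have Z0: "Z > 0"
  proof -
    have "q^u > 1" "q^(p+1+k) > 1" using qpow_gt1[OF q u1] qpow_gt1[OF q, of "p+1+k"] by auto
    thus ?thesis unfolding Z_def using q by simp
  qed
  define R where "R = q^(u + 2*k - 2)"
  have R0: "R > 0" unfolding R_def using q by simp
  have nn: "0 \<le> q^(Suc p) - 1" "0 \<le> q^(u+k) - 1" "0 \<le> q^k - 1" "0 \<le> q^(p+1+k) - 1" using qge by (auto simp del: power_Suc)
  have Rq: "R * q = q^j * q^k" unfolding R_def by (simp only: ej(1) flip: power_add power_Suc2) simp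
  have Rr: "R = q^(u-1) * q^k * q^(k-1)" unfolding R_def by (simp only: ej(2)[symmetric] power_add)
  have "VV q n d p i j * Z * (R * q) = (VV q n d p i j * (q^u - 1) * (q - 1) * (q^(p+1+k) - 1) * q^j) * q^k"
    unfolding Z_def Rq by (simp add: algebra_simps)
  also have "\<dots> = VV q n d (Suc p) i j * q^(u-1) * ((q^(Suc p) - 1) * q^k) * (q^(u+k) - 1) * (q^k - 1)"
    unfolding idn by (simp add: algebra_simps)
  also have "\<dots> \<le> VV q n d (Suc p) i j * q^(u-1) * (q^(p+1+k) - 1) * (3/2 * q^k * (q^u - 1)) * (3/2 * q^(k-1) * (q - 1))"
  proof -
    have c: "0 \<le> VV q n d (Suc p) i j * q^(u-1)" using V0 q by simp
    have "((q^(Suc p) - 1) * q^k) * (q^(u+k) - 1) \<le> (q^(p+1+k) - 1) * (3/2 * q^k * (q^u - 1))"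
      using i1 i2 nn qge[of k] by (intro mult_mono) auto
    hence "((q^(Suc p) - 1) * q^k) * (q^(u+k) - 1) * (q^k - 1) \<le> (q^(p+1+k) - 1) * (3/2 * q^k * (q^u - 1)) * (3/2 * q^(k-1) * (q - 1))"
      using i3 nn i1 i2 by (intro mult_mono) auto
    from mult_left_mono[OF this c] show ?thesis by (simp add: mult.assoc)
  qed
  also have "\<dots> = (9/4 * VV q n d (Suc p) i j) * Z * R"
  proof -
    have gen: "\<And>V a X K U K1 W::real. V * a * X * (3/2*K*U) * (3/2*K1*W) = (9/4*V) * (U*W*X) * (a*K*K1)"
      by (simp add: algebra_simps)
    show ?thesis unfolding Z_def Rr by (rule gen)
  qed
  finally have "(VV q n d p i j * q) * (Z * R) \<le> (9/4 * VV q n d (Suc p) i j) * (Z * R)"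
    by (simp add: algebra_simps)
  hence "VV q n d p i j * q \<le> 9/4 * VV q n d (Suc p) i j" using Z0 R0 by simp
  moreover have "VV q n d p i j * 3 \<le> VV q n d p i j * q" using V0 q by simp
  ultimately show ?thesis by simp
qed

lemma S_Suc: fixes t :: "nat \<Rightarrow> real" assumes "lo \<le> h"
  shows "(\<Sum>x\<in>{lo..Suc h}. (-1)^(Suc h - x) * t x) = t (Suc h) - (\<Sum>x\<in>{lo..h}. (-1)^(h - x) * t x)"
proof -
  have "(\<Sum>x\<in>{lo..Suc h}. (-1)^(Suc h - x) * t x) = (-1)^(Suc h - Suc h) * t (Suc h) + (\<Sum>x\<in>{lo..h}. (-1)^(Suc h - x) * t x)"
    using assms by (simp add: sum.nat_ivl_Suc')
  also have "(\<Sum>x\<in>{lo..h}. (-1)^(Suc h - x) * t x) = (\<Sum>x\<in>{lo..h}. - ((-1)^(h - x) * t x))"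
    by (rule sum.cong) (auto simp: Suc_diff_le)
  finally show ?thesis by (simp add: sum_negf)
qed

lemma alt: fixes t :: "nat \<Rightarrow> real" assumes nn: "\<And>x. 0 \<le> t x"
  and mono: "\<And>x. lo \<le> x \<Longrightarrow> x < lo + k \<Longrightarrow> t x \<le> t (Suc x)"
  shows "0 \<le> (\<Sum>x\<in>{lo..lo+k}. (-1)^(lo + k - x) * t x) \<and> (\<Sum>x\<in>{lo..lo+k}. (-1)^(lo + k - x) * t x) \<le> t (lo + k)
     \<and> (k > 0 \<longrightarrow> t (lo + k) - t (lo + k - 1) \<le> (\<Sum>x\<in>{lo..lo+k}. (-1)^(lo + k - x) * t x))
     \<and> (k = 0 \<longrightarrow> (\<Sum>x\<in>{lo..lo+k}. (-1)^(lo + k - x) * t x) = t (lo + k))"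
  using mono
proof (induction k)
  case 0 thus ?case using nn[of lo] by simp
next
  case (Suc k)
  have IH: "0 \<le> (\<Sum>x\<in>{lo..lo+k}. (-1)^(lo + k - x) * t x)" "(\<Sum>x\<in>{lo..lo+k}. (-1)^(lo + k - x) * t x) \<le> t (lo + k)"
    using Suc by auto
  have m: "t (lo + k) \<le> t (Suc (lo + k))" using Suc.prems by simp
  have e: "(\<Sum>x\<in>{lo..lo + Suc k}. (-1)^(lo + Suc k - x) * t x) = t (Suc (lo + k)) - (\<Sum>x\<in>{lo..lo+k}. (-1)^(lo + k - x) * t x)"
    using S_Suc[of lo "lo + k" t] by simp
  show ?case unfolding e using IH m by simp
qed

lemma real_choose2: "real (a choose 2) = real a * (real a - 1) / 2"
  by (induction a) (simp_all add: choose2_Suc algebra_simps add_divide_distrib)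

definition NN :: "nat \<Rightarrow> nat \<Rightarrow> nat \<Rightarrow> nat \<Rightarrow> nat \<Rightarrow> nat" where
  "NN n d h i j = j * (j + h - i) + ((i - h) choose 2) + h * (i - h) + j * (d - h - j) + (n - d - j) * (n - d - i + h - (n - d - j))"

lemma NN_gexp: assumes "h \<in> hrange d i j" "i \<le> d" "j \<le> d" "2*d \<le> n"
  shows "real (NN n d h i j) = gexp n d h i j"
proof -
  have r: "i \<le> j + h" "h \<le> i" "h + j \<le> d" using assms unfolding hrange_def by auto
  have e: "real (j + h - i) = real j + real h - real i" "real (i - h) = real i - real h"
    "real (d - h - j) = real d - real h - real j" "real (n - d - j) = real n - real d - real j"
    "real (n - d - i + h - (n - d - j)) = real j + real h - real i"
    using r assms by (simp_all add: of_nat_diff)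
  have "real (NN n d h i j) = real j * real (j+h-i) + real ((i-h) choose 2) + real h * real (i-h) + real j * real (d-h-j) + real (n-d-j) * real (n-d-i+h-(n-d-j))"
    unfolding NN_def by (simp only: of_nat_add of_nat_mult)
  also have "\<dots> = real j * (real j + real h - real i) + (real i - real h) * ((real i - real h) - 1) / 2 + real h * (real i - real h) + real j * (real d - real h - real j) + (real n - real d - real j) * (real j + real h - real i)"
    by (simp only: e real_choose2)
  also have "\<dots> = gexp n d h i j" unfolding gexp_def by (simp add: field_simps power2_eq_square)
  finally show ?thesis .
qed

lemma VV_bounds: assumes q: "(q::real) \<ge> 3" and h: "h \<in> hrange d i j" and a: "i \<le> d" "j \<le> d" "2*d \<le> n"
  shows "q^(NN n d h i j) \<le> VV q n d h i j"
    and "h = i \<or> h = d - j \<Longrightarrow> VV q n d h i j < 4 * q^(NN n d h i j)"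
proof -
  have r: "h \<le> i" "j \<le> d - h" "n - d - j \<le> n - d - i + h" using h a unfolding hrange_def by auto
  define E where "E = j * (j + h - i) + ((i - h) choose 2)"
  define B1 where "B1 = gbinom q i (int h)"
  define B2 where "B2 = gbinom q (d - h) (int j)"
  define B3 where "B3 = gbinom q (n - d - i + h) (int (n - d - j))"
  define P1 where "P1 = q^(h * (i - h))"
  define P2 where "P2 = q^(j * (d - h - j))"
  define P3 where "P3 = q^((n - d - j) * (n - d - i + h - (n - d - j)))"
  have V: "VV q n d h i j = q^E * B1 * B2 * B3" unfolding VV_def E_def B1_def B2_def B3_def ..
  have N: "q^(NN n d h i j) = q^E * P1 * P2 * P3" unfolding NN_def E_def P1_def P2_def P3_def
    by (simp only: power_add)
  have dd: "d - h - j = d - h - j" ..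
  have lb: "P1 \<le> B1" "P2 \<le> B2" "P3 \<le> B3" unfolding P1_def P2_def P3_def B1_def B2_def B3_def
    using gb_lower'[OF q r(1)] gb_lower'[OF q r(2)] gb_lower'[OF q r(3)] by (auto simp: diff_commute)
  have ub: "B1 < 2 * P1" "B2 < 2 * P2" "B3 < 2 * P3" unfolding P1_def P2_def P3_def B1_def B2_def B3_def
    using gb_lt2[OF q r(1)] gb_lt2[OF q r(2)] gb_lt2[OF q r(3)] by (auto simp: diff_commute)
  have pos: "P1 > 0" "P2 > 0" "P3 > 0" "q^E > 0" unfolding P1_def P2_def P3_def using q by auto
  have "q^E * P1 * P2 * P3 \<le> q^E * B1 * B2 * B3"
    using lb pos by (intro mult_mono) auto
  thus "q^(NN n d h i j) \<le> VV q n d h i j" using N V by simp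
  assume c: "h = i \<or> h = d - j"
  show "VV q n d h i j < 4 * q^(NN n d h i j)"
  proof (cases "h = i")
    case True
    have "B1 = 1" "P1 = 1" unfolding B1_def P1_def True using gb_mm[OF q] by auto
    moreover have "B2 * B3 < (2*P2) * (2*P3)" using ub pos lb by (intro mult_strict_mono) auto
    ultimately show ?thesis unfolding V N using pos
      by (simp add: mult.assoc)
  next
    case False
    hence hd: "h = d - j" using c by simp
    have "d - h = j" using hd a by simp
    hence "B2 = 1" "P2 = 1" unfolding B2_def P2_def using gb_mm[OF q] by auto
    moreover have "B1 * B3 < (2*P1) * (2*P3)" using ub pos lb by (intro mult_strict_mono) auto
    ultimately show ?thesis unfolding V N using pos
      by (simp add: mult.assoc mult.left_commute)
  qed
qed

theorem lemma3p2:
  fixes q n d i j :: nat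
  assumes "primepow q" and "q \<ge> 3"
    and "n \<ge> 2 * d" and "2 * d \<ge> 2"
    and "i \<le> d" and "1 \<le> j" and "j \<le> d"
  shows "(\<not> (n = 2 * d \<and> d - j \<le> i) \<longrightarrow>
           4/9 * real q powr gexp n d (min i (d - j)) i j < \<bar>Geig (real q) n d j i\<bar>
         \<and> \<bar>Geig (real q) n d j i\<bar> < 4 * real q powr gexp n d (min i (d - j)) i j)
       \<and> ((n = 2 * d \<and> d - j \<le> i) \<longrightarrow>
           1 \<ge> \<bar>Geig (real q) n d j i\<bar> / \<bar>Tsum (real q) n d (d - j) i j\<bar>
         \<and> \<bar>Geig (real q) n d j i\<bar> / \<bar>Tsum (real q) n d (d - j) i j\<bar> \<ge> 5/32)"
proof -
  define Q where "Q = real q"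
  have q: "Q \<ge> 3" using assms(2) unfolding Q_def by simp
  define lo where "lo = i - j"
  define h0 where "h0 = min i (d - j)"
  have hr: "hrange d i j = {lo..h0}" unfolding hrange_def lo_def h0_def ..
  have loh: "lo \<le> h0" using assms unfolding lo_def h0_def by auto
  define k where "k = h0 - lo"
  have hk: "h0 = lo + k" using loh unfolding k_def by simp
  define t where "t x = \<bar>VV Q n d x i j\<bar>" for x
  have tV: "t x = VV Q n d x i j" if "x \<in> hrange d i j" for x
    using T_form(2)[OF q that assms(5) assms(3) assms(7)] unfolding t_def by simp
  have tT: "\<bar>Tsum Q n d x i j\<bar> = t x" if "x \<in> hrange d i j" for x
    using T_abs[OF q that assms(5) assms(3) assms(7)] tV[OF that] by simp
  have G: "Geig Q n d j i = (-1)^(i-h0) * (\<Sum>x\<in>{lo..h0}. (-1)^(h0-x) * t x)"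
    unfolding Geig_def hr sum_distrib_left
  proof (rule sum.cong)
    fix x assume x: "x \<in> {lo..h0}"
    hence xr: "x \<in> hrange d i j" using hr by simp
    have e: "i - x = (i - h0) + (h0 - x)" using x unfolding h0_def by auto
    show "Tsum Q n d x i j = (-1)^(i-h0) * ((-1)^(h0-x) * t x)"
      unfolding T_form(1)[OF q xr assms(5) assms(3) assms(7)] tV[OF xr] e power_add by simp
  qed simp
  have step: "t x \<le> 3/4 * t (Suc x)" if x: "lo \<le> x" "x < h0" for x
  proof -
    have a: "Suc x \<le> i" "Suc x + j \<le> d" "i \<le> j + x" "2*d \<le> n" using x assms unfolding lo_def h0_def by auto
    have r: "x \<in> hrange d i j" "Suc x \<in> hrange d i j" using x hr by auto
    show ?thesis
    proof (cases "x + d + j + 2 \<le> n")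
      case True
      have "VV Q n d x i j \<le> 3/8 * VV Q n d (Suc x) i j" by (rule ratio_crude[OF q a True])
      moreover have "VV Q n d (Suc x) i j > 0" using T_form(2)[OF q r(2) assms(5) assms(3) assms(7)] .
      ultimately show ?thesis unfolding tV[OF r(1)] tV[OF r(2)] by simp
    next
      case False
      hence b: "n = 2*d" "Suc x + j = d" using a by auto
      show ?thesis unfolding tV[OF r(1)] tV[OF r(2)] by (rule ratio_special[OF q b a(1) a(3)])
    qed
  qed
  have stepg: "t (h0 - 1) \<le> 3/8 * t h0" if c: "\<not> (n = 2 * d \<and> d - j \<le> i)" and l: "lo < h0"
  proof -
    define x where "x = h0 - 1"
    have x: "lo \<le> x" "Suc x = h0" using l unfolding x_def by auto
    have a: "Suc x \<le> i" "Suc x + j \<le> d" "i \<le> j + x" "2*d \<le> n" using x assms unfolding lo_def h0_def by auto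
    have b: "x + d + j + 2 \<le> n" using a c x(2) assms(3) unfolding h0_def by auto
    have r: "x \<in> hrange d i j" "Suc x \<in> hrange d i j" using x l hr by auto
    have "VV Q n d x i j \<le> 3/8 * VV Q n d (Suc x) i j" by (rule ratio_crude[OF q a b])
    thus ?thesis using tV[OF r(1)] tV[OF r(2)] x(2) unfolding x_def by simp
  qed
  have tnn: "\<And>x. 0 \<le> t x" unfolding t_def by simp
  have mono: "\<And>x. lo \<le> x \<Longrightarrow> x < lo + k \<Longrightarrow> t x \<le> t (Suc x)"
  proof -
    fix x assume "lo \<le> x" "x < lo + k"
    hence "t x \<le> 3/4 * t (Suc x)" using step hk by simp
    thus "t x \<le> t (Suc x)" using tnn[of "Suc x"] by simp
  qed
  define S where "S = (\<Sum>x\<in>{lo..h0}. (-1)^(h0-x) * t x)"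
  have A: "0 \<le> S" "S \<le> t h0" "lo < h0 \<Longrightarrow> t h0 - t (h0 - 1) \<le> S" "lo = h0 \<Longrightarrow> S = t h0"
    using alt[of t lo k, OF tnn mono] unfolding S_def hk by auto
  have GS: "\<bar>Geig Q n d j i\<bar> = S" using G A(1) unfolding S_def[symmetric] by (simp add: abs_mult)
  have h0r: "h0 \<in> hrange d i j" using hr loh by simp
  have th0: "t h0 > 0" using tV[OF h0r] T_form(2)[OF q h0r assms(5) assms(3) assms(7)] by simp
  have low: "S \<ge> 1/4 * t h0"
  proof (cases "lo < h0")
    case True
    have "t (h0 - 1) \<le> 3/4 * t h0" using step[of "h0 - 1"] True by simp
    thus ?thesis using A(3)[OF True] by simp
  next
    case False thus ?thesis using A(4) loh th0 by simp
  qed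
  have part1: "\<not> (n = 2 * d \<and> d - j \<le> i) \<longrightarrow>
           4/9 * Q powr gexp n d h0 i j < \<bar>Geig Q n d j i\<bar>
         \<and> \<bar>Geig Q n d j i\<bar> < 4 * Q powr gexp n d h0 i j"
  proof
    assume c: "\<not> (n = 2 * d \<and> d - j \<le> i)"
    have pw: "Q powr gexp n d h0 i j = Q^(NN n d h0 i j)"
      using NN_gexp[OF h0r assms(5) assms(7) assms(3)] q by (simp add: powr_realpow[symmetric])
    have vb: "Q^(NN n d h0 i j) \<le> t h0" "t h0 < 4 * Q^(NN n d h0 i j)"
    proof -
      have "h0 = i \<or> h0 = d - j" unfolding h0_def by linarith
      thus "Q^(NN n d h0 i j) \<le> t h0" "t h0 < 4 * Q^(NN n d h0 i j)"
        using VV_bounds[OF q h0r assms(5) assms(7) assms(3)] tV[OF h0r] by auto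
    qed
    have P0: "Q^(NN n d h0 i j) > 0" using q by simp
    have l58: "S \<ge> 5/8 * t h0"
    proof (cases "lo < h0")
      case True thus ?thesis using A(3)[OF True] stepg[OF c True] by simp
    next
      case False thus ?thesis using A(4) loh th0 by simp
    qed
    show "4/9 * Q powr gexp n d h0 i j < \<bar>Geig Q n d j i\<bar> \<and> \<bar>Geig Q n d j i\<bar> < 4 * Q powr gexp n d h0 i j"
      unfolding GS pw using vb P0 l58 A(2) by linarith
  qed
  have part2: "(n = 2 * d \<and> d - j \<le> i) \<longrightarrow>
           1 \<ge> \<bar>Geig Q n d j i\<bar> / \<bar>Tsum Q n d (d - j) i j\<bar>
         \<and> \<bar>Geig Q n d j i\<bar> / \<bar>Tsum Q n d (d - j) i j\<bar> \<ge> 5/32"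
  proof
    assume c: "n = 2 * d \<and> d - j \<le> i"
    hence hh: "h0 = d - j" unfolding h0_def by simp
    have T: "\<bar>Tsum Q n d (d - j) i j\<bar> = t h0" using tT[OF h0r] hh by simp
    show "1 \<ge> \<bar>Geig Q n d j i\<bar> / \<bar>Tsum Q n d (d - j) i j\<bar> \<and> \<bar>Geig Q n d j i\<bar> / \<bar>Tsum Q n d (d - j) i j\<bar> \<ge> 5/32"
      unfolding GS T using th0 A(2) low by (simp add: divide_le_eq le_divide_eq)
  qed
  show ?thesis using part1 part2 unfolding Q_def h0_def by simp
qed

end
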